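(* For every $(\alpha,\beta,L,M)\in(0,+\infty)^3\times\mathbb{R}$, $$\frac12\Bigl(\frac{9\alpha^2\beta M^2}{2}\Bigr)^{1/3}L-2\cdot6^{2/3}\alpha\le\mu(\alpha,\beta,L,M)\le\mu^*(\alpha,\beta,L,M)\le\frac12\Bigl(\frac{9\alpha^2\beta M^2}{2}\Bigr)^{1/3}L+\frac{3\alpha}{2}.$$
   Context: $S((0,L))$ is the space of step functions with finitely many jumps on $(0,L)$: functions $u=c+\sum_{s\in S_u}J(s)\mathbf{1}_{[s,L)}$ with finite jump set $S_u\subset(0,L)$ and nonzero jumps; $u(0),u(L)$ denote the values near the endpoints. For $u\in S((0,L))$, $\mathcal{G}(\alpha,\beta,f,(0,L),u)=\alpha\,\#(S_u\cap(0,L))+\beta\int_0^L(u(x)-f(x))^2dx$. Then $\mu(\alpha,\beta,L,M)=\min\{\mathcal{G}(\alpha,\beta,Mx,(0,L),u):u\in S((0,L))\}$ and $\mu^*(\alpha,\beta,L,M)=\min\{\mathcal{G}(\alpha,\beta,Mx,(0,L),u):u\in S((0,L)),u(0)=0,u(L)=ML\}$, where $Mx$ denotes the function $x\mapsto Mx$. *)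

theory Defs
  imports "HOL-Analysis.Analysis"
begin

text \<open>A step function on (0,L) with finitely many jumps, given by its value c near 0,
  its finite jump set S in (0,L), and nonzero jumps J:
  u = c + sum over s in S of J(s) times the indicator of [s,L).\<close>

definition step_fun :: "real \<Rightarrow> real set \<Rightarrow> (real \<Rightarrow> real) \<Rightarrow> real \<Rightarrow> real" where
  "step_fun c S J x = c + (\<Sum>s\<in>S. if s \<le> x then J s else 0)"

definition valid_step :: "real \<Rightarrow> real set \<Rightarrow> (real \<Rightarrow> real) \<Rightarrow> bool" where
  "valid_step L S J \<longleftrightarrow> finite S \<and> S \<subseteq> {0<..<L} \<and> (\<forall>s\<in>S. J s \<noteq> 0)"

definition G :: "real \<Rightarrow> real \<Rightarrow> (real \<Rightarrow> real) \<Rightarrow> real \<Rightarrow> real \<Rightarrow> real set \<Rightarrow> (real \<Rightarrow> real) \<Rightarrow> real" where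
  "G \<alpha> \<beta> f L c S J =
     \<alpha> * real (card S) + \<beta> * integral {0..L} (\<lambda>x. (step_fun c S J x - f x)\<^sup>2)"

definition mu :: "real \<Rightarrow> real \<Rightarrow> real \<Rightarrow> real \<Rightarrow> real" where
  "mu \<alpha> \<beta> L M = Inf {G \<alpha> \<beta> (\<lambda>x. M * x) L c S J | c S J. valid_step L S J}"

text \<open>Boundary conditions: u(0) = c (value near 0), u(L) = c + sum of jumps (value near L).\<close>
definition mu_star :: "real \<Rightarrow> real \<Rightarrow> real \<Rightarrow> real \<Rightarrow> real" where
  "mu_star \<alpha> \<beta> L M = Inf {G \<alpha> \<beta> (\<lambda>x. M * x) L c S J | c S J.
      valid_step L S J \<and> c = 0 \<and> c + (\<Sum>s\<in>S. J s) = M * L}"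

end

theory Submission
  imports Defs
begin

definition Fp :: "real \<Rightarrow> real \<Rightarrow> real \<Rightarrow> real" where
  "Fp d M x = d^2*x - d*M*x^2 + M^2*x^3/3"

lemma poly_int:
  fixes d M u v :: real assumes "u \<le> v"
  shows "((\<lambda>x. (d - M*x)^2) has_integral (Fp d M v - Fp d M u)) {u..v}"
proof -
  have "((\<lambda>x. Fp d M x) has_real_derivative (d - M*x)^2) (at x within {u..v})" for x
    unfolding Fp_def
    by (auto intro!: derivative_eq_intros simp: power2_eq_square power3_eq_cube algebra_simps)
  then show ?thesis
    by (intro fundamental_theorem_of_calculus[OF assms])
       (simp add: has_real_derivative_iff_has_vector_derivative[symmetric])
qed

lemma piece_bound:
  fixes d M u v :: real assumes "u \<le> v"
  shows "M^2*(v-u)^3/12 \<le> Fp d M v - Fp d M u"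
proof -
  have "Fp d M v - Fp d M u - M^2*(v-u)^3/12 = (v-u)*(d - M*(u+v)/2)^2"
    unfolding Fp_def by (simp add: field_simps power2_eq_square power3_eq_cube)
  moreover have "(v-u)*(d - M*(u+v)/2)^2 \<ge> 0" using assms by simp
  ultimately show ?thesis by linarith
qed

lemma cube_ineq:
  fixes x y N :: real assumes "x \<ge> 0" "y \<ge> 0" "N \<ge> 1"
  shows "(x+y)^3/(N+1)^2 \<le> x^3/N^2 + y^3"
proof -
  define m where "m = (x+y)/(N+1)"
  have m0: "m \<ge> 0" using assms by (simp add: m_def)
  have t1: "(x/N)^3 \<ge> 3*m^2*(x/N) - 2*m^3"
  proof -
    have g: "z^3 - (3*m^2*z - 2*m^3) = (z - m)^2*(z + 2*m)" for z :: real
      by (simp add: algebra_simps power2_eq_square power3_eq_cube)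
    have "(x/N)^3 - (3*m^2*(x/N) - 2*m^3) = (x/N - m)^2*(x/N + 2*m)" by (rule g)
    moreover have "(x/N - m)^2*(x/N + 2*m) \<ge> 0" using assms m0 by simp
    ultimately show ?thesis by linarith
  qed
  have t2: "y^3 \<ge> 3*m^2*y - 2*m^3"
  proof -
    have "y^3 - (3*m^2*y - 2*m^3) = (y - m)^2*(y + 2*m)"
      by (simp add: algebra_simps power2_eq_square power3_eq_cube)
    moreover have "(y - m)^2*(y + 2*m) \<ge> 0" using assms m0 by simp
    ultimately show ?thesis by linarith
  qed
  have e1: "x^3/N^2 = N*(x/N)^3" using assms by (simp add: power3_eq_cube power2_eq_square field_simps)
  have "x^3/N^2 + y^3 \<ge> N*(3*m^2*(x/N) - 2*m^3) + (3*m^2*y - 2*m^3)"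
    using t1 t2 e1 assms by (smt (verit) mult_left_mono)
  also have "N*(3*m^2*(x/N) - 2*m^3) + (3*m^2*y - 2*m^3) = 3*m^2*(x+y) - 2*(N+1)*m^3"
    using assms by (simp add: field_simps)
  also have "\<dots> = (N+1)*m^3"
  proof -
    have xy: "x + y = (N+1)*m" using assms by (simp add: m_def)
    show ?thesis by (simp add: xy power2_eq_square power3_eq_cube algebra_simps)
  qed
  also have "\<dots> = (x+y)^3/(N+1)^2"
  proof -
    have g: "K*(s/K)^3 = s^3/K^2" if "K > 0" for s K :: real
      using that by (simp add: power_divide field_simps power2_eq_square power3_eq_cube)
    have "N + 1 > 0" using assms by simp
    from g[OF this] show ?thesis by (simp add: m_def)
  qed
  finally show ?thesis .
qed

lemma amgm3:
  fixes a b t :: real assumes "a > 0" "t \<ge> 0" "a^2*b = t^3"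
  shows "3*t \<le> 2*a + b"
proof -
  have "a^2*(2*a + b - 3*t) = (a-t)^2*(2*a+t)"
    using assms(3) by (simp add: algebra_simps power2_eq_square power3_eq_cube)
  moreover have "(a-t)^2*(2*a+t) \<ge> 0" using assms by simp
  ultimately have "a^2*(2*a + b - 3*t) \<ge> 0" by simp
  then have "2*a + b - 3*t \<ge> 0" using assms(1)
    by (simp add: zero_le_mult_iff)
  then show ?thesis by simp
qed

lemma cube_root3:
  fixes x :: real assumes "x \<ge> 0" shows "(x powr (1/3))^3 = x"
proof (cases "x = 0")
  case False
  then have "x > 0" using assms by simp
  then have "(x powr (1/3))^3 = (x powr (1/3)) powr (real 3)"
    by (simp add: powr_realpow)
  also have "\<dots> = x" using \<open>x > 0\<close> by (simp add: powr_powr)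
  finally show ?thesis .
qed simp

lemma step_insert:
  assumes "finite A" "b \<notin> A"
  shows "step_fun c (insert b A) J x = step_fun c A J x + (if b \<le> x then J b else 0)"
  using assms by (simp add: step_fun_def)

lemma step_all_le:
  assumes "\<forall>s\<in>A. s \<le> x"
  shows "step_fun c A J x = c + sum J A"
  using assms unfolding step_fun_def by (intro arg_cong[where f="(+) c"] sum.cong) auto

lemma lower_int:
  fixes c M :: real and J :: "real \<Rightarrow> real"
  assumes "finite S"
  shows "\<forall>a. 0 \<le> a \<longrightarrow> S \<subseteq> {0<..<a} \<longrightarrow>
     ((\<lambda>x. (step_fun c S J x - M*x)^2) integrable_on {0..a}) \<and>
     M^2*a^3/(12*(real (card S)+1)^2) \<le> integral {0..a} (\<lambda>x. (step_fun c S J x - M*x)^2)"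
  using assms
proof (induction S rule: finite_linorder_max_induct)
  case empty
  show ?case
  proof (intro allI impI)
    fix a :: real assume a0: "0 \<le> a"
    have sf: "step_fun c {} J x = c" for x by (simp add: step_fun_def)
    have h: "((\<lambda>x. (step_fun c {} J x - M*x)^2) has_integral (Fp c M a - Fp c M 0)) {0..a}"
      using poly_int[OF a0, of c M] by (simp add: sf)
    have "M^2*(a-0)^3/12 \<le> Fp c M a - Fp c M 0" by (rule piece_bound[OF a0])
    then show "((\<lambda>x. (step_fun c {} J x - M*x)^2) integrable_on {0..a}) \<and>
     M^2*a^3/(12*(real (card ({}::real set))+1)^2) \<le> integral {0..a} (\<lambda>x. (step_fun c {} J x - M*x)^2)"
      using h by (auto simp: integral_unique has_integral_integrable)
  qed
next
  case (insert b A)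
  show ?case
  proof (intro allI impI)
    fix a :: real assume a0: "0 \<le> a" and sub: "insert b A \<subseteq> {0<..<a}"
    have bA: "b \<notin> A" using insert.hyps(2) by auto
    have b0: "0 < b" "b < a" using sub by auto
    have subA: "A \<subseteq> {0<..<b}" using sub insert.hyps(2) by auto
    from insert.IH[rule_format, of b] b0 subA
    have IH1: "((\<lambda>x. (step_fun c A J x - M*x)^2) integrable_on {0..b})"
      and IH2: "M^2*b^3/(12*(real (card A)+1)^2) \<le> integral {0..b} (\<lambda>x. (step_fun c A J x - M*x)^2)"
      by auto
    define I1 where "I1 = integral {0..b} (\<lambda>x. (step_fun c A J x - M*x)^2)"
    define g where "g = (\<lambda>x. (step_fun c (insert b A) J x - M*x)^2)"
    have h1: "(g has_integral I1) {0..b}"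
    proof (rule has_integral_spike_finite[of "{b}"])
      show "((\<lambda>x. (step_fun c A J x - M*x)^2) has_integral I1) {0..b}"
        using IH1 by (simp add: I1_def has_integral_integral)
      fix x assume "x \<in> {0..b} - {b}"
      then have "x < b" by auto
      then show "g x = (step_fun c A J x - M*x)^2"
        by (simp add: g_def step_insert[OF insert.hyps(1) bA])
    qed simp
    define d where "d = c + sum J A + J b"
    have h2: "(g has_integral (Fp d M a - Fp d M b)) {b..a}"
    proof (rule has_integral_eq[OF _ poly_int])
      fix x assume "x \<in> {b..a}"
      then have "b \<le> x" by auto
      then have "\<forall>s\<in>A. s \<le> x" using insert.hyps(2) by force
      then show "(d - M*x)^2 = g x" using \<open>b \<le> x\<close>
        by (simp add: g_def step_insert[OF insert.hyps(1) bA] step_all_le d_def)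
    qed (use b0 in simp)
    have h: "(g has_integral (I1 + (Fp d M a - Fp d M b))) {0..a}"
      by (rule has_integral_combine[OF _ _ h1 h2]) (use b0 in auto)
    have pb: "M^2*(a-b)^3/12 \<le> Fp d M a - Fp d M b" using piece_bound[where d=d and M=M and u=b and v=a] b0 by simp
    have ci: "(b+(a-b))^3/(real (card A)+1+1)^2 \<le> b^3/(real (card A)+1)^2 + (a-b)^3"
      by (rule cube_ineq) (use b0 in auto)
    have card: "real (card (insert b A)) + 1 = real (card A) + 1 + 1"
      using insert.hyps(1) bA by simp
    have "M^2*a^3/(12*(real (card (insert b A))+1)^2) = M^2/12 * ((b+(a-b))^3/(real (card A)+1+1)^2)"
      unfolding card by simp
    also have "\<dots> \<le> M^2/12 * (b^3/(real (card A)+1)^2 + (a-b)^3)"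
      by (rule mult_left_mono[OF ci]) simp
    also have "\<dots> = M^2*b^3/(12*(real (card A)+1)^2) + M^2*(a-b)^3/12"
      by (simp add: algebra_simps)
    also have "\<dots> \<le> I1 + (Fp d M a - Fp d M b)" using IH2 pb unfolding I1_def by linarith
    finally show "(g integrable_on {0..a}) \<and> M^2*a^3/(12*(real (card (insert b A))+1)^2) \<le> integral {0..a} g"
      using h by (auto simp: integral_unique has_integral_integrable)
  qed
qed

lemma Fp_shift: "Fp (M*p) M v - Fp (M*p) M u = M^2*((v-p)^3 - (u-p)^3)/3"
  unfolding Fp_def by (simp add: field_simps power2_eq_square power3_eq_cube)

definition stair :: "real \<Rightarrow> nat \<Rightarrow> real set" where
  "stair h m = (\<lambda>j. (real j - 1/2)*h) ` {1..m}"

lemma stair_props: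
  assumes "h > 0"
  shows "finite (stair h m) \<and> card (stair h m) = m \<and> stair h m \<subseteq> {0<..<real m*h}
         \<and> (\<forall>s\<in>stair h m. s \<le> (real m - 1/2)*h)"
proof -
  have "inj_on (\<lambda>j. (real j - 1/2)*h) {1..m}" using assms by (auto simp: inj_on_def)
  then have "card (stair h m) = m" by (simp add: stair_def card_image)
  moreover have "stair h m \<subseteq> {0<..<real m*h}"
  proof
    fix s assume "s \<in> stair h m"
    then obtain j where j: "j \<in> {1..m}" "s = (real j - 1/2)*h" by (auto simp: stair_def)
    then have "real j \<ge> 1" "real j \<le> real m" by auto
    then have hh: "h*real j \<ge> h*1" "h * real j \<le> h*real m" using assms
      by (intro mult_left_mono; simp)+
    have "s = h*real j - h/2" using j(2) by (simp add: algebra_simps)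
    then have "0 < s \<and> s < h*real m" using hh assms by linarith
    then show "s \<in> {0<..<real m*h}" by (simp add: mult.commute)
  qed
  moreover have "\<forall>s\<in>stair h m. s \<le> (real m - 1/2)*h"
    using assms by (auto simp: stair_def intro!: mult_right_mono)
  ultimately show ?thesis by (simp add: stair_def)
qed

lemma stair_Suc: "stair h (Suc m) = insert ((real m + 1/2)*h) (stair h m)"
proof -
  have "{1..Suc m} = insert (Suc m) {1..m}" by auto
  then show ?thesis by (simp add: stair_def algebra_simps)
qed

lemma upper_int:
  fixes h M :: real assumes h0: "h > 0"
  shows "((\<lambda>x. (step_fun 0 (stair h m) (\<lambda>_. M*h) x - M*x)^2) has_integral (real m * M^2*h^3/12)) {0..real m*h}"
proof (induction m)
  case 0
  show ?case by (simp add: stair_def step_fun_def has_integral_refl)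
next
  case (Suc m)
  define b where "b = (real m + 1/2)*h"
  have P: "finite (stair h m)" "card (stair h m) = m" "\<forall>s\<in>stair h m. s \<le> (real m - 1/2)*h"
    using stair_props[OF h0, of m] by auto
  have bA: "b \<notin> stair h m" using P(3) h0 by (force simp: b_def algebra_simps)
  define g where "g = (\<lambda>x. (step_fun 0 (stair h (Suc m)) (\<lambda>_. M*h) x - M*x)^2)"
  have gs: "g x = (step_fun 0 (stair h m) (\<lambda>_. M*h) x + (if b \<le> x then M*h else 0) - M*x)^2" for x
    unfolding g_def stair_Suc b_def[symmetric] by (simp add: step_insert[OF P(1) bA])
  have old: "step_fun 0 (stair h m) (\<lambda>_. M*h) x = M*(real m*h)" if "x \<ge> real m*h" for x
  proof -
    have "(real m - 1/2)*h \<le> x" using that h0 by (simp add: algebra_simps)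
    then have "\<forall>s\<in>stair h m. s \<le> x" using P(3) by force
    then show ?thesis using P(2) by (simp add: step_all_le)
  qed
  have mb: "real m*h \<le> b" "b \<le> real (Suc m)*h" "0 \<le> real m * h" using h0 by (auto simp: b_def algebra_simps)
  have h1: "(g has_integral (real m * M^2*h^3/12)) {0..real m*h}"
  proof (rule has_integral_eq[OF _ Suc.IH])
    fix x assume "x \<in> {0..real m*h}"
    then have "\<not> b \<le> x" using h0 by (auto simp: b_def algebra_simps)
    then show "(step_fun 0 (stair h m) (\<lambda>_. M*h) x - M*x)^2 = g x" by (simp add: gs)
  qed
  have h2: "(g has_integral (Fp (M*(real m*h)) M b - Fp (M*(real m*h)) M (real m*h))) {real m*h..b}"
  proof (rule has_integral_spike_finite[of "{b}", OF _ _ poly_int[OF mb(1)]])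
    fix x assume "x \<in> {real m*h..b} - {b}"
    then show "g x = (M*(real m*h) - M*x)^2" by (auto simp: gs old)
  qed simp
  have h3: "(g has_integral (Fp (M*(real (Suc m)*h)) M (real (Suc m)*h) - Fp (M*(real (Suc m)*h)) M b)) {b..real (Suc m)*h}"
  proof (rule has_integral_eq[OF _ poly_int[OF mb(2)]])
    fix x assume "x \<in> {b..real (Suc m)*h}"
    then have "b \<le> x" "x \<ge> real m*h" using mb by auto
    then show "(M*(real (Suc m)*h) - M*x)^2 = g x" by (simp add: gs old algebra_simps)
  qed
  have h: "(g has_integral (real m * M^2*h^3/12 + (Fp (M*(real m*h)) M b - Fp (M*(real m*h)) M (real m*h))
      + (Fp (M*(real (Suc m)*h)) M (real (Suc m)*h) - Fp (M*(real (Suc m)*h)) M b))) {0..real (Suc m)*h}"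
    by (rule has_integral_combine[OF _ _ has_integral_combine[OF _ _ h1 h2] h3]) (use mb in auto)
  have eq: "real m * M^2*h^3/12 + (Fp (M*(real m*h)) M b - Fp (M*(real m*h)) M (real m*h))
      + (Fp (M*(real (Suc m)*h)) M (real (Suc m)*h) - Fp (M*(real (Suc m)*h)) M b) = real (Suc m) * M^2*h^3/12"
    unfolding Fp_shift b_def by (simp add: field_simps power2_eq_square power3_eq_cube)
  show ?case using h unfolding g_def eq .
qed

theorem proposition4p3:
  fixes \<alpha> \<beta> L M :: real
  assumes "\<alpha> > 0" and "\<beta> > 0" and "L > 0"
  shows "(1/2) * (9 * \<alpha>\<^sup>2 * \<beta> * M\<^sup>2 / 2) powr (1/3) * L - 2 * 6 powr (2/3) * \<alpha> \<le> mu \<alpha> \<beta> L M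
       \<and> mu \<alpha> \<beta> L M \<le> mu_star \<alpha> \<beta> L M
       \<and> mu_star \<alpha> \<beta> L M \<le> (1/2) * (9 * \<alpha>\<^sup>2 * \<beta> * M\<^sup>2 / 2) powr (1/3) * L + 3 * \<alpha> / 2"
proof -
  note a0 = assms(1) and b0 = assms(2) and L0 = assms(3)
  define q where "q = (9 * \<alpha>\<^sup>2 * \<beta> * M\<^sup>2 / 2) powr (1/3)"
  define A where "A = \<beta>*M^2*L^3/12"
  define t where "t = q*L/6"
  have q0: "q \<ge> 0" by (simp add: q_def)
  have q3: "q^3 = 9 * \<alpha>\<^sup>2 * \<beta> * M\<^sup>2 / 2" unfolding q_def
    by (rule cube_root3) (use b0 in simp)
  have t0: "t \<ge> 0" using q0 L0 by (simp add: t_def)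
  have t3: "t^3 = \<alpha>^2*A/4"
  proof -
    have "t^3 = q^3*L^3/216" by (simp add: t_def power_mult_distrib power_divide)
    then show ?thesis by (simp add: q3 A_def)
  qed
  have A0: "A \<ge> 0" using b0 L0 by (simp add: A_def)
  define Gs where "Gs = (\<lambda>c S J. G \<alpha> \<beta> (\<lambda>x. M * x) L c S J)"
  have Gform: "Gs c S J = \<alpha> * real (card S) + \<beta> * integral {0..L} (\<lambda>x. (step_fun c S J x - M*x)^2)" for c S J
    by (simp add: Gs_def G_def)
  have six: "6 powr (2/3) \<ge> (1::real)" by (rule ge_one_powr_ge_zero) auto
  have LB: "q*L/2 - 2 * 6 powr (2/3) * \<alpha> \<le> Gs c S J" if v: "valid_step L S J" for c S J
  proof -
    have fin: "finite S" and sub: "S \<subseteq> {0<..<L}" using v by (auto simp: valid_step_def)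
    define k where "k = real (card S) + 1"
    have k1: "k \<ge> 1" by (simp add: k_def)
    have I: "M^2*L^3/(12*k^2) \<le> integral {0..L} (\<lambda>x. (step_fun c S J x - M*x)^2)"
      using lower_int[OF fin, of c J M] sub L0 by (auto simp: k_def)
    have "A/k^2 = \<beta> * (M^2*L^3/(12*k^2))" by (simp add: A_def)
    also have "\<dots> \<le> \<beta> * integral {0..L} (\<lambda>x. (step_fun c S J x - M*x)^2)"
      using I b0 by (intro mult_left_mono) auto
    finally have G1: "\<alpha>*(k-1) + A/k^2 \<le> Gs c S J" by (simp add: Gform k_def)
    have "(\<alpha>*k/2)^2 * (A/k^2) = (\<alpha>^2*A/4) * (k^2/k^2)"
      by (simp add: power_mult_distrib power_divide)
    also have "\<dots> = t^3" using k1 by (simp add: t3)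
    finally have "(\<alpha>*k/2)^2 * (A/k^2) = t^3" .
    then have "3*t \<le> 2*(\<alpha>*k/2) + A/k^2" by (intro amgm3) (use a0 k1 t0 in auto)
    then have "3*t \<le> \<alpha>*k + A/k^2" by simp
    moreover have "3*t = q*L/2" by (simp add: t_def)
    moreover have "\<alpha> \<le> 2 * 6 powr (2/3) * \<alpha>" using six a0 by simp
    ultimately have "q*L/2 - 2 * 6 powr (2/3) * \<alpha> \<le> \<alpha>*(k-1) + A/k^2"
      using right_diff_distrib[of \<alpha> k 1] by linarith
    with G1 show ?thesis by linarith
  qed
  define Smu where "Smu = {G \<alpha> \<beta> (\<lambda>x. M * x) L c S J | c S J. valid_step L S J}"
  define Sst where "Sst = {G \<alpha> \<beta> (\<lambda>x. M * x) L c S J | c S J.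
      valid_step L S J \<and> c = 0 \<and> c + (\<Sum>s\<in>S. J s) = M * L}"
  have sub: "Sst \<subseteq> Smu" by (auto simp: Smu_def Sst_def)
  have bdd: "bdd_below Smu"
    by (rule bdd_belowI[where m="q*L/2 - 2 * 6 powr (2/3) * \<alpha>"]) (auto simp: Smu_def intro: LB[unfolded Gs_def])
  then have bdd2: "bdd_below Sst" using sub by (meson bdd_below_mono)
  have W: "\<exists>x\<in>Sst. x \<le> q*L/2 + 3*\<alpha>/2"
  proof (cases "M = 0")
    case True
    have "valid_step L {} (\<lambda>_. 0)" by (simp add: valid_step_def)
    then have "Gs 0 {} (\<lambda>_. 0) \<in> Sst" using True unfolding Sst_def Gs_def
      by (intro CollectI exI[where x=0] exI[where x="{}"] exI[where x="\<lambda>_. 0"]) simp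
    moreover have "Gs 0 {} (\<lambda>_. 0) = 0" using True by (simp add: Gform step_fun_def)
    moreover have "q = 0" using True by (simp add: q_def)
    ultimately show ?thesis using a0 by (intro bexI) auto
  next
    case False
    have "9 * \<alpha>\<^sup>2 * \<beta> * M\<^sup>2 / 2 > 0" using False a0 b0 by simp
    then have "q > 0" using False a0 b0 by (simp add: q_def)
    then have tp: "t > 0" using L0 by (simp add: t_def)
    define m where "m = nat \<lceil>2*t/\<alpha>\<rceil>"
    have m1: "real m \<ge> 2*t/\<alpha>" unfolding m_def by linarith
    have dpos: "2*t/\<alpha> > 0" using tp a0 by simp
    have cm: "real m = of_int \<lceil>2*t/\<alpha>\<rceil>" unfolding m_def using dpos by simp
    have m2: "real m < 2*t/\<alpha> + 1" unfolding cm using ceiling_correct[of "2*t/\<alpha>"] by linarith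
    have mpos: "real m > 0" using m1 dpos by linarith
    define h where "h = L / real m"
    have h0: "h > 0" using mpos L0 by (simp add: h_def)
    have mh: "real m * h = L" using mpos by (simp add: h_def)
    have P: "finite (stair h m)" "card (stair h m) = m" "stair h m \<subseteq> {0<..<L}"
      using stair_props[OF h0, of m] mh by auto
    have v: "valid_step L (stair h m) (\<lambda>_. M*h)" using P False h0 by (simp add: valid_step_def)
    have sumJ: "0 + (\<Sum>s\<in>stair h m. M*h) = M*L" using P(2) mh by (simp add: algebra_simps)
    have inS: "Gs 0 (stair h m) (\<lambda>_. M*h) \<in> Sst" using v sumJ unfolding Sst_def Gs_def
      by (intro CollectI exI[where x=0] exI[where x="stair h m"] exI[where x="\<lambda>_. M*h"]) simp
    have int: "integral {0..L} (\<lambda>x. (step_fun 0 (stair h m) (\<lambda>_. M*h) x - M*x)^2) = real m * M^2*h^3/12"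
      using upper_int[OF h0, of m M] mh by (simp add: integral_unique)
    have Am: "A/(real m)^2 = \<beta>*(real m*M^2*h^3/12)"
    proof -
      have e: "(real m*h)^3/(real m)^2 = real m*h^3" using mpos
        by (simp add: power_mult_distrib power2_eq_square power3_eq_cube)
      have "A/(real m)^2 = \<beta>*M^2/12 * ((real m*h)^3/(real m)^2)"
        unfolding A_def mh[symmetric] by simp
      also have "\<dots> = \<beta>*(real m*M^2*h^3/12)" unfolding e by simp
      finally show ?thesis .
    qed
    have Gv: "Gs 0 (stair h m) (\<lambda>_. M*h) = \<alpha>*real m + A/(real m)^2"
      unfolding Gform int P(2) Am by simp
    have pm: "(2*t/\<alpha>)^2 \<le> (real m)^2" by (rule power_mono) (use m1 dpos in auto)
    have pp: "0 < (real m)^2 * (2*t/\<alpha>)^2" using mpos dpos by (intro mult_pos_pos zero_less_power)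
    have "A/(real m)^2 \<le> A/(2*t/\<alpha>)^2" by (rule divide_left_mono[OF pm A0 pp])
    also have "\<dots> = (A*\<alpha>^2)/(4*t^2)" using a0 by (simp add: power_divide power_mult_distrib)
    also have "\<dots> = (4*t^3)/(4*t^2)"
    proof -
      have "A*\<alpha>^2 = 4*t^3" using t3 by (simp add: algebra_simps)
      then show ?thesis by simp
    qed
    also have "\<dots> = t" using tp by (simp add: power2_eq_square power3_eq_cube)
    finally have "A/(real m)^2 \<le> t" .
    moreover have "\<alpha>*real m \<le> 2*t + \<alpha>"
    proof -
      have "\<alpha>*real m \<le> \<alpha>*(2*t/\<alpha> + 1)" using m2 a0 by (intro mult_left_mono) auto
      also have "\<dots> = 2*t + \<alpha>" using a0 by (simp add: algebra_simps)
      finally show ?thesis .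
    qed
    moreover have "3*t = q*L/2" by (simp add: t_def)
    ultimately have "Gs 0 (stair h m) (\<lambda>_. M*h) \<le> q*L/2 + 3*\<alpha>/2" using Gv a0
      by linarith
    then show ?thesis using inS by blast
  qed
  have ne: "Sst \<noteq> {}" using W by blast
  have ne2: "Smu \<noteq> {}" using ne sub by blast
  have r1: "q*L/2 - 2 * 6 powr (2/3) * \<alpha> \<le> Inf Smu"
  proof (rule cInf_greatest[OF ne2])
    fix x assume "x \<in> Smu"
    then obtain c S J where x: "x = G \<alpha> \<beta> (\<lambda>x. M * x) L c S J" "valid_step L S J"
      unfolding Smu_def by blast
    show "q*L/2 - 2 * 6 powr (2/3) * \<alpha> \<le> x" using LB[OF x(2), of c] unfolding x(1) Gs_def .
  qed
  have r2: "Inf Smu \<le> Inf Sst" by (rule cInf_superset_mono[OF ne bdd sub])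
  obtain w where "w \<in> Sst" "w \<le> q*L/2 + 3*\<alpha>/2" using W by blast
  then have r3: "Inf Sst \<le> q*L/2 + 3*\<alpha>/2" using cInf_lower[OF _ bdd2, of w] by linarith
  have e1: "mu \<alpha> \<beta> L M = Inf Smu" by (simp add: mu_def Smu_def)
  have e2: "mu_star \<alpha> \<beta> L M = Inf Sst" by (simp add: mu_star_def Sst_def)
  show ?thesis unfolding e1 e2 q_def[symmetric] using r1 r2 r3 by linarith
qed

end
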